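(* If $(\Phi,\{J_{P(z)}\}_{z\in\mathbb C^\times},\varphi)$ is a (lax) vertex tensor functor between vertex tensor categories $\mathcal C_1$ and $\mathcal C_2$, then $(\Phi,J=J_{P(1)},\varphi)$ is a (lax) braided tensor functor with respect to the induced braided tensor category structures on $\mathcal C_1$ and $\mathcal C_2$.
   Context: A vertex tensor category (in the sense used here, following Huang–Lepowsky–Zhang, not necessarily consisting of modules) is a category with bifunctors $\boxtimes_{P(z)}$ for $z\in\mathbb C^\times$, a unit object, natural isomorphisms: parallel transport $T_\gamma:\boxtimes_{P(z_1)}\to\boxtimes_{P(z_2)}$ for each continuous path $\gamma$ in $\mathbb C^\times$ from $z_1$ to $z_2$ (written $T_{z_1\to z_2}$ when $\gamma$ does not cross the positive real axis), $P(z)$-unit isomorphisms $l_{P(z)},r_{P(z)}$, $P(z_1,z_2)$-associativity isomorphisms $\mathcal A_{P(z_1,z_2);W_1,W_2,W_3}:W_1\boxtimes_{P(z_1)}(W_2\boxtimes_{P(z_2)}W_3)\to(W_1\boxtimes_{P(z_1-z_2)}W_2)\boxtimes_{P(z_2)}W_3$ for $|z_1|>|z_2|>|z_1-z_2|>0$, and $P(z)$-braiding isomorphisms $\mathcal R_{P(z);W_1,W_2}:W_1\boxtimes_{P(z)}W_2\to W_2\boxtimes_{P(-z)}W_1$, satisfying coherence conditions. The induced braided tensor category has $\boxtimes=\boxtimes_{P(1)}$, $l=l_{P(1)}$, $r=r_{P(1)}$, associativity $\mathcal A=T_{r_2\to1}\circ(T_{r_1-r_2\to1}\boxtimes_{P(r_2)}1)\circ\mathcal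 A_{P(r_1,r_2)}\circ(1\boxtimes_{P(r_1)}T_{1\to r_2})\circ T_{1\to r_1}$ for reals $r_1>r_2>r_1-r_2>0$ (independent of the choice), and braiding $\mathcal R=T_{-1\to1}\circ\mathcal R_{P(1)}$. A (lax) vertex tensor functor is $(\Phi,\{J_{P(z)}\},\varphi)$ with $\Phi:\mathcal C_1\to\mathcal C_2$ a functor, $J_{P(z)}:\boxtimes_{P(z)}\circ(\Phi\times\Phi)\to\Phi\circ\boxtimes_{P(z)}$ natural isomorphisms (natural transformations in the lax case), $\varphi:V_2\to\Phi(V_1)$ an isomorphism between the unit objects, such that: $J_{P(z_2)}\circ T_\gamma=\Phi(T_\gamma)\circ J_{P(z_1)}$ for all paths $\gamma$ from $z_1$ to $z_2$; $\Phi(l_{P(z)})\circ J_{P(z);V_1,M}\circ(\varphi\boxtimes_{P(z)}1)=l_{P(z);\Phi(M)}$ and $\Phi(r_{P(z)})\circ J_{P(z);M,V_1}\circ(1\boxtimes_{P(z)}\varphi)=r_{P(z);\Phi(M)}$; $J_{P(z_2)}\circ(J_{P(z_1-z_2)}\boxtimes_{P(z_2)}1)\circ\mathcal A_{P(z_1,z_2)}=\Phi(\mathcal A_{P(z_1,z_2)})\circ J_{P(z_1)}\circ(1\boxtimes_{P(z_1)}J_{P(z_2)})$ for $|z_1|>|z_2|>|z_1-z_2|>0$; and $J_{P(-z);M_2,M_1}\circ\mathcal R_{P(z)}=\Phi(\mathcal R_{P(z)})\circ J_{P(z);M_1,M_2}$. A (lax) braided tensor functor is a functor with (not necessarily invertible,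 in the lax case) natural $J:\Phi(\cdot)\boxtimes\Phi(\cdot)\to\Phi(\cdot\boxtimes\cdot)$ and unit isomorphism $\varphi$ compatible with the unit, associativity and braiding isomorphisms. *)

theory Defs
  imports "HOL-Analysis.Analysis"
begin

record ('o, 'm) category =
  Ob  :: "'o set"
  Ar  :: "'m set"
  Dom :: "'m \<Rightarrow> 'o"
  Cod :: "'m \<Rightarrow> 'o"
  Cmp :: "'m \<Rightarrow> 'm \<Rightarrow> 'm"   (* Cmp C g f = g o f *)
  Idm :: "'o \<Rightarrow> 'm"

definition hom :: "('o, 'm) category \<Rightarrow> 'o \<Rightarrow> 'o \<Rightarrow> 'm set" where
  "hom C A B = {f \<in> Ar C. Dom C f = A \<and> Cod C f = B}"

definition is_category :: "('o, 'm) category \<Rightarrow> bool" where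
  "is_category C \<longleftrightarrow>
     (\<forall>f\<in>Ar C. Dom C f \<in> Ob C \<and> Cod C f \<in> Ob C) \<and>
     (\<forall>A\<in>Ob C. Idm C A \<in> hom C A A) \<and>
     (\<forall>f\<in>Ar C. \<forall>g\<in>Ar C. Cod C f = Dom C g \<longrightarrow>
         Cmp C g f \<in> hom C (Dom C f) (Cod C g)) \<and>
     (\<forall>f\<in>Ar C. Cmp C (Idm C (Cod C f)) f = f \<and> Cmp C f (Idm C (Dom C f)) = f) \<and>
     (\<forall>f\<in>Ar C. \<forall>g\<in>Ar C. \<forall>h\<in>Ar C. Cod C f = Dom C g \<longrightarrow> Cod C g = Dom C h \<longrightarrow>
         Cmp C h (Cmp C g f) = Cmp C (Cmp C h g) f)"

definition is_iso :: "('o, 'm) category \<Rightarrow> 'm \<Rightarrow> bool" where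
  "is_iso C f \<longleftrightarrow> f \<in> Ar C \<and>
     (\<exists>g\<in>hom C (Cod C f) (Dom C f).
        Cmp C g f = Idm C (Dom C f) \<and> Cmp C f g = Idm C (Cod C f))"

definition is_bifunctor ::
  "('o, 'm) category \<Rightarrow> ('o \<Rightarrow> 'o \<Rightarrow> 'o) \<Rightarrow> ('m \<Rightarrow> 'm \<Rightarrow> 'm) \<Rightarrow> bool" where
  "is_bifunctor C tob tar \<longleftrightarrow>
     (\<forall>A\<in>Ob C. \<forall>B\<in>Ob C. tob A B \<in> Ob C) \<and>
     (\<forall>f\<in>Ar C. \<forall>g\<in>Ar C. tar f g \<in> hom C (tob (Dom C f) (Dom C g)) (tob (Cod C f) (Cod C g))) \<and>
     (\<forall>A\<in>Ob C. \<forall>B\<in>Ob C. tar (Idm C A) (Idm C B) = Idm C (tob A B)) \<and>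
     (\<forall>f\<in>Ar C. \<forall>g\<in>Ar C. \<forall>f'\<in>Ar C. \<forall>g'\<in>Ar C.
        Cod C f = Dom C g \<longrightarrow> Cod C f' = Dom C g' \<longrightarrow>
        tar (Cmp C g f) (Cmp C g' f') = Cmp C (tar g g') (tar f f'))"

definition is_functor ::
  "('o1, 'm1) category \<Rightarrow> ('o2, 'm2) category \<Rightarrow> ('o1 \<Rightarrow> 'o2) \<Rightarrow> ('m1 \<Rightarrow> 'm2) \<Rightarrow> bool" where
  "is_functor C1 C2 Fo Fm \<longleftrightarrow>
     (\<forall>A\<in>Ob C1. Fo A \<in> Ob C2) \<and>
     (\<forall>f\<in>Ar C1. Fm f \<in> hom C2 (Fo (Dom C1 f)) (Fo (Cod C1 f))) \<and>
     (\<forall>A\<in>Ob C1. Fm (Idm C1 A) = Idm C2 (Fo A)) \<and>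
     (\<forall>f\<in>Ar C1. \<forall>g\<in>Ar C1. Cod C1 f = Dom C1 g \<longrightarrow> Fm (Cmp C1 g f) = Cmp C2 (Fm g) (Fm f))"

definition cpath :: "(real \<Rightarrow> complex) \<Rightarrow> bool" where
  "cpath \<gamma> \<longleftrightarrow> path \<gamma> \<and> path_image \<gamma> \<subseteq> - {0}"

record ('o, 'm) vtc_data =
  VCat :: "('o, 'm) category"
  VTob :: "complex \<Rightarrow> 'o \<Rightarrow> 'o \<Rightarrow> 'o"      (* object part of the P(z)-tensor product *)
  VTar :: "complex \<Rightarrow> 'm \<Rightarrow> 'm \<Rightarrow> 'm"
  VUnit :: "'o"
  VPar :: "(real \<Rightarrow> complex) \<Rightarrow> 'o \<Rightarrow> 'o \<Rightarrow> 'm"  (* parallel transport T_gamma *)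
  VL :: "complex \<Rightarrow> 'o \<Rightarrow> 'm"
  VR :: "complex \<Rightarrow> 'o \<Rightarrow> 'm"
  VA :: "complex \<Rightarrow> complex \<Rightarrow> 'o \<Rightarrow> 'o \<Rightarrow> 'o \<Rightarrow> 'm"
  VB :: "complex \<Rightarrow> 'o \<Rightarrow> 'o \<Rightarrow> 'm"

definition assoc_dom :: "complex \<Rightarrow> complex \<Rightarrow> bool" where
  "assoc_dom z1 z2 \<longleftrightarrow> cmod z1 > cmod z2 \<and> cmod z2 > cmod (z1 - z2) \<and> cmod (z1 - z2) > 0"

definition is_vtc :: "('o, 'm) vtc_data \<Rightarrow> bool" where
  "is_vtc V \<longleftrightarrow> (let C = VCat V in
     is_category C \<and> VUnit V \<in> Ob C \<and>
     (\<forall>z. z \<noteq> 0 \<longrightarrow> is_bifunctor C (VTob V z) (VTar V z)) \<and>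
     (\<forall>\<gamma>. cpath \<gamma> \<longrightarrow>
        (\<forall>A\<in>Ob C. \<forall>B\<in>Ob C.
           VPar V \<gamma> A B \<in> hom C (VTob V (pathstart \<gamma>) A B) (VTob V (pathfinish \<gamma>) A B) \<and>
           is_iso C (VPar V \<gamma> A B)) \<and>
        (\<forall>f\<in>Ar C. \<forall>g\<in>Ar C.
           Cmp C (VPar V \<gamma> (Cod C f) (Cod C g)) (VTar V (pathstart \<gamma>) f g) =
           Cmp C (VTar V (pathfinish \<gamma>) f g) (VPar V \<gamma> (Dom C f) (Dom C g)))) \<and>
     (\<forall>z. z \<noteq> 0 \<longrightarrow>
        (\<forall>W\<in>Ob C. VL V z W \<in> hom C (VTob V z (VUnit V) W) W \<and> is_iso C (VL V z W)
                 \<and> VR V z W \<in> hom C (VTob V z W (VUnit V)) W \<and> is_iso C (VR V z W)) \<and>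
        (\<forall>f\<in>Ar C. Cmp C f (VL V z (Dom C f)) =
                     Cmp C (VL V z (Cod C f)) (VTar V z (Idm C (VUnit V)) f)
                 \<and> Cmp C f (VR V z (Dom C f)) =
                     Cmp C (VR V z (Cod C f)) (VTar V z f (Idm C (VUnit V))))) \<and>
     (\<forall>z1 z2. assoc_dom z1 z2 \<longrightarrow>
        (\<forall>A\<in>Ob C. \<forall>B\<in>Ob C. \<forall>D\<in>Ob C.
           VA V z1 z2 A B D \<in> hom C (VTob V z1 A (VTob V z2 B D))
                                    (VTob V z2 (VTob V (z1 - z2) A B) D) \<and>
           is_iso C (VA V z1 z2 A B D)) \<and>
        (\<forall>f\<in>Ar C. \<forall>g\<in>Ar C. \<forall>h\<in>Ar C.
           Cmp C (VA V z1 z2 (Cod C f) (Cod C g) (Cod C h)) (VTar V z1 f (VTar V z2 g h)) =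
           Cmp C (VTar V z2 (VTar V (z1 - z2) f g) h) (VA V z1 z2 (Dom C f) (Dom C g) (Dom C h)))) \<and>
     (\<forall>z. z \<noteq> 0 \<longrightarrow>
        (\<forall>A\<in>Ob C. \<forall>B\<in>Ob C. VB V z A B \<in> hom C (VTob V z A B) (VTob V (- z) B A) \<and>
                             is_iso C (VB V z A B)) \<and>
        (\<forall>f\<in>Ar C. \<forall>g\<in>Ar C.
           Cmp C (VB V z (Cod C f) (Cod C g)) (VTar V z f g) =
           Cmp C (VTar V (- z) g f) (VB V z (Dom C f) (Dom C g)))))"

text \<open>\<open>strong = True\<close>: the J_{P(z)} are natural isomorphisms; \<open>strong = False\<close>: lax case.\<close>
definition is_vertex_tensor_functor ::
  "bool \<Rightarrow> ('o1, 'm1) vtc_data \<Rightarrow> ('o2, 'm2) vtc_data \<Rightarrow> ('o1 \<Rightarrow> 'o2) \<Rightarrow> ('m1 \<Rightarrow> 'm2)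
    \<Rightarrow> (complex \<Rightarrow> 'o1 \<Rightarrow> 'o1 \<Rightarrow> 'm2) \<Rightarrow> 'm2 \<Rightarrow> bool" where
  "is_vertex_tensor_functor strong V1 V2 Fo Fm J \<phi> \<longleftrightarrow>
   (let C1 = VCat V1; C2 = VCat V2 in
     is_functor C1 C2 Fo Fm \<and>
     (\<forall>z. z \<noteq> 0 \<longrightarrow>
        (\<forall>A\<in>Ob C1. \<forall>B\<in>Ob C1.
           J z A B \<in> hom C2 (VTob V2 z (Fo A) (Fo B)) (Fo (VTob V1 z A B)) \<and>
           (strong \<longrightarrow> is_iso C2 (J z A B))) \<and>
        (\<forall>f\<in>Ar C1. \<forall>g\<in>Ar C1.
           Cmp C2 (Fm (VTar V1 z f g)) (J z (Dom C1 f) (Dom C1 g)) =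
           Cmp C2 (J z (Cod C1 f) (Cod C1 g)) (VTar V2 z (Fm f) (Fm g)))) \<and>
     \<phi> \<in> hom C2 (VUnit V2) (Fo (VUnit V1)) \<and> is_iso C2 \<phi> \<and>
     (\<forall>\<gamma>. cpath \<gamma> \<longrightarrow> (\<forall>A\<in>Ob C1. \<forall>B\<in>Ob C1.
        Cmp C2 (J (pathfinish \<gamma>) A B) (VPar V2 \<gamma> (Fo A) (Fo B)) =
        Cmp C2 (Fm (VPar V1 \<gamma> A B)) (J (pathstart \<gamma>) A B))) \<and>
     (\<forall>z. z \<noteq> 0 \<longrightarrow> (\<forall>M\<in>Ob C1.
        Cmp C2 (Fm (VL V1 z M)) (Cmp C2 (J z (VUnit V1) M) (VTar V2 z \<phi> (Idm C2 (Fo M))))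
          = VL V2 z (Fo M) \<and>
        Cmp C2 (Fm (VR V1 z M)) (Cmp C2 (J z M (VUnit V1)) (VTar V2 z (Idm C2 (Fo M)) \<phi>))
          = VR V2 z (Fo M))) \<and>
     (\<forall>z1 z2. assoc_dom z1 z2 \<longrightarrow> (\<forall>M1\<in>Ob C1. \<forall>M2\<in>Ob C1. \<forall>M3\<in>Ob C1.
        Cmp C2 (J z2 (VTob V1 (z1 - z2) M1 M2) M3)
          (Cmp C2 (VTar V2 z2 (J (z1 - z2) M1 M2) (Idm C2 (Fo M3)))
                  (VA V2 z1 z2 (Fo M1) (Fo M2) (Fo M3))) =
        Cmp C2 (Fm (VA V1 z1 z2 M1 M2 M3))
          (Cmp C2 (J z1 M1 (VTob V1 z2 M2 M3))
                  (VTar V2 z1 (Idm C2 (Fo M1)) (J z2 M2 M3))))) \<and>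
     (\<forall>z. z \<noteq> 0 \<longrightarrow> (\<forall>M1\<in>Ob C1. \<forall>M2\<in>Ob C1.
        Cmp C2 (J (- z) M2 M1) (VB V2 z (Fo M1) (Fo M2)) =
        Cmp C2 (Fm (VB V1 z M1 M2)) (J z M1 M2))))"

record ('o, 'm) btc_data =
  BCat :: "('o, 'm) category"
  BTob :: "'o \<Rightarrow> 'o \<Rightarrow> 'o"
  BTar :: "'m \<Rightarrow> 'm \<Rightarrow> 'm"
  BUnit :: "'o"
  BL :: "'o \<Rightarrow> 'm"
  BR :: "'o \<Rightarrow> 'm"
  BA :: "'o \<Rightarrow> 'o \<Rightarrow> 'o \<Rightarrow> 'm"   (* W1 (x) (W2 (x) W3) -> (W1 (x) W2) (x) W3 *)
  BB :: "'o \<Rightarrow> 'o \<Rightarrow> 'm"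

definition is_braided_tensor_functor ::
  "bool \<Rightarrow> ('o1, 'm1) btc_data \<Rightarrow> ('o2, 'm2) btc_data \<Rightarrow> ('o1 \<Rightarrow> 'o2) \<Rightarrow> ('m1 \<Rightarrow> 'm2)
    \<Rightarrow> ('o1 \<Rightarrow> 'o1 \<Rightarrow> 'm2) \<Rightarrow> 'm2 \<Rightarrow> bool" where
  "is_braided_tensor_functor strong B1 B2 Fo Fm J \<phi> \<longleftrightarrow>
   (let C1 = BCat B1; C2 = BCat B2 in
     is_functor C1 C2 Fo Fm \<and>
     (\<forall>A\<in>Ob C1. \<forall>B\<in>Ob C1.
        J A B \<in> hom C2 (BTob B2 (Fo A) (Fo B)) (Fo (BTob B1 A B)) \<and>
        (strong \<longrightarrow> is_iso C2 (J A B))) \<and>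
     (\<forall>f\<in>Ar C1. \<forall>g\<in>Ar C1.
        Cmp C2 (Fm (BTar B1 f g)) (J (Dom C1 f) (Dom C1 g)) =
        Cmp C2 (J (Cod C1 f) (Cod C1 g)) (BTar B2 (Fm f) (Fm g))) \<and>
     \<phi> \<in> hom C2 (BUnit B2) (Fo (BUnit B1)) \<and> is_iso C2 \<phi> \<and>
     (\<forall>M\<in>Ob C1.
        Cmp C2 (Fm (BL B1 M)) (Cmp C2 (J (BUnit B1) M) (BTar B2 \<phi> (Idm C2 (Fo M))))
          = BL B2 (Fo M) \<and>
        Cmp C2 (Fm (BR B1 M)) (Cmp C2 (J M (BUnit B1)) (BTar B2 (Idm C2 (Fo M)) \<phi>))
          = BR B2 (Fo M)) \<and>
     (\<forall>M1\<in>Ob C1. \<forall>M2\<in>Ob C1. \<forall>M3\<in>Ob C1.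
        Cmp C2 (J (BTob B1 M1 M2) M3)
          (Cmp C2 (BTar B2 (J M1 M2) (Idm C2 (Fo M3))) (BA B2 (Fo M1) (Fo M2) (Fo M3))) =
        Cmp C2 (Fm (BA B1 M1 M2 M3))
          (Cmp C2 (J M1 (BTob B1 M2 M3)) (BTar B2 (Idm C2 (Fo M1)) (J M2 M3)))) \<and>
     (\<forall>M1\<in>Ob C1. \<forall>M2\<in>Ob C1.
        Cmp C2 (J M2 M1) (BB B2 (Fo M1) (Fo M2)) = Cmp C2 (Fm (BB B1 M1 M2)) (J M1 M2)))"

text \<open>T_{z1 -> z2} for positive reals: the straight segment (stays on the positive real axis).\<close>
definition rpath :: "real \<Rightarrow> real \<Rightarrow> real \<Rightarrow> complex" where
  "rpath r s = linepath (complex_of_real r) (complex_of_real s)"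

text \<open>T_{-1 -> 1}: a path from -1 to 1 not crossing the positive real axis
  (arg convention 0 <= arg < 2 pi): the upper unit semicircle, traversed clockwise.\<close>
definition minus_one_to_one :: "real \<Rightarrow> complex" where
  "minus_one_to_one t = exp (\<i> * complex_of_real (pi * (1 - t)))"

definition induced_assoc :: "('o, 'm) vtc_data \<Rightarrow> real \<Rightarrow> real \<Rightarrow> 'o \<Rightarrow> 'o \<Rightarrow> 'o \<Rightarrow> 'm" where
  "induced_assoc V r1 r2 W1 W2 W3 =
    (let C = VCat V in
     Cmp C (VPar V (rpath r2 1) (VTob V 1 W1 W2) W3)
      (Cmp C (VTar V (complex_of_real r2) (VPar V (rpath (r1 - r2) 1) W1 W2) (Idm C W3))
       (Cmp C (VA V (complex_of_real r1) (complex_of_real r2) W1 W2 W3)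
        (Cmp C (VTar V (complex_of_real r1) (Idm C W1) (VPar V (rpath 1 r2) W2 W3))
               (VPar V (rpath 1 r1) W1 (VTob V 1 W2 W3))))))"

definition induced_btc :: "('o, 'm) vtc_data \<Rightarrow> real \<Rightarrow> real \<Rightarrow> ('o, 'm) btc_data" where
  "induced_btc V r1 r2 =
    \<lparr> BCat = VCat V, BTob = VTob V 1, BTar = VTar V 1, BUnit = VUnit V,
      BL = VL V 1, BR = VR V 1, BA = induced_assoc V r1 r2,
      BB = (\<lambda>W1 W2. Cmp (VCat V) (VPar V minus_one_to_one W2 W1) (VB V 1 W1 W2)) \<rparr>"

end

theory Submission
  imports Defs
begin

lemma cpath_rpath:
  assumes "0 < a" "0 < b" shows "cpath (rpath a b)"
proof -
  have "(0::complex) \<notin> closed_segment (of_real a) (of_real b)"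
  proof
    assume "(0::complex) \<in> closed_segment (of_real a) (of_real b)"
    then have "of_real 0 \<in> closed_segment (of_real a) (of_real b :: complex)" by simp
    then have "(0::real) \<in> closed_segment a b" by (simp only: of_real_closed_segment)
    then show False using assms by (auto simp: closed_segment_eq_real_ivl split: if_splits)
  qed
  then show ?thesis unfolding cpath_def rpath_def by auto
qed

lemma rpath_ends [simp]:
  "pathstart (rpath a b) = of_real a" "pathfinish (rpath a b) = of_real b"
  by (simp_all add: rpath_def)

lemma cpath_m11: "cpath minus_one_to_one"
  unfolding cpath_def path_def path_image_def minus_one_to_one_def
  by (auto intro!: continuous_intros)

lemma m11_ends [simp]:
  "pathstart minus_one_to_one = -1" "pathfinish minus_one_to_one = 1"
  by (simp_all add: pathstart_def pathfinish_def minus_one_to_one_def)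

lemma hom_iff [simp]: "f \<in> hom C A B \<longleftrightarrow> f \<in> Ar C \<and> Dom C f = A \<and> Cod C f = B"
  by (simp add: hom_def)

context fixes C :: "('o,'m) category" assumes cat: "is_category C"
begin
lemma cat_Cmp_Ar [simp]: "f \<in> Ar C \<Longrightarrow> g \<in> Ar C \<Longrightarrow> Cod C f = Dom C g \<Longrightarrow> Cmp C g f \<in> Ar C"
  using cat unfolding is_category_def by auto
lemma cat_Cmp_Dom [simp]: "f \<in> Ar C \<Longrightarrow> g \<in> Ar C \<Longrightarrow> Cod C f = Dom C g \<Longrightarrow> Dom C (Cmp C g f) = Dom C f"
  using cat unfolding is_category_def by auto
lemma cat_Cmp_Cod [simp]: "f \<in> Ar C \<Longrightarrow> g \<in> Ar C \<Longrightarrow> Cod C f = Dom C g \<Longrightarrow> Cod C (Cmp C g f) = Cod C g"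
  using cat unfolding is_category_def by auto
lemma cat_Idm [simp]: "A \<in> Ob C \<Longrightarrow> Idm C A \<in> Ar C"  "A \<in> Ob C \<Longrightarrow> Dom C (Idm C A) = A"
   "A \<in> Ob C \<Longrightarrow> Cod C (Idm C A) = A"
  using cat unfolding is_category_def by auto
lemma cat_DomCod_Ob [simp]: "f \<in> Ar C \<Longrightarrow> Dom C f \<in> Ob C" "f \<in> Ar C \<Longrightarrow> Cod C f \<in> Ob C"
  using cat unfolding is_category_def by auto
lemma cat_idl [simp]: "f \<in> Ar C \<Longrightarrow> A = Cod C f \<Longrightarrow> Cmp C (Idm C A) f = f"
  using cat unfolding is_category_def by auto
lemma cat_idr [simp]: "f \<in> Ar C \<Longrightarrow> A = Dom C f \<Longrightarrow> Cmp C f (Idm C A) = f"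
  using cat unfolding is_category_def by auto
lemma cat_assoc: "f \<in> Ar C \<Longrightarrow> g \<in> Ar C \<Longrightarrow> h \<in> Ar C \<Longrightarrow> Cod C f = Dom C g \<Longrightarrow> Cod C g = Dom C h \<Longrightarrow>
    Cmp C h (Cmp C g f) = Cmp C (Cmp C h g) f"
  using cat unfolding is_category_def by auto

lemma step2:
  assumes "a \<in> Ar C" "b \<in> Ar C" "x \<in> Ar C" "Cod C x = Dom C b" "Cod C b = Dom C a"
    "c \<in> Ar C" "d \<in> Ar C" "Cod C d = Dom C c" "Cmp C a b = Cmp C c d"
  shows "Cmp C a (Cmp C b x) = Cmp C c (Cmp C d x)"
proof -
  have "Dom C d = Dom C b" using assms cat_Cmp_Dom by metis
  then show ?thesis using assms cat_assoc by metis
qed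

lemma step3:
  assumes "a \<in> Ar C" "b \<in> Ar C" "e \<in> Ar C" "x \<in> Ar C" "Cod C x = Dom C e" "Cod C e = Dom C b" "Cod C b = Dom C a"
    "c \<in> Ar C" "d \<in> Ar C" "f \<in> Ar C" "Cod C f = Dom C d" "Cod C d = Dom C c"
    "Cmp C a (Cmp C b e) = Cmp C c (Cmp C d f)"
  shows "Cmp C a (Cmp C b (Cmp C e x)) = Cmp C c (Cmp C d (Cmp C f x))"
proof -
  have "Cmp C a (Cmp C b (Cmp C e x)) = Cmp C (Cmp C a (Cmp C b e)) x"
    using assms by (simp add: cat_assoc)
  also have "\<dots> = Cmp C (Cmp C c (Cmp C d f)) x" using assms by simp
  also have "\<dots> = Cmp C c (Cmp C d (Cmp C f x))"
  proof -
    have "Dom C (Cmp C a (Cmp C b e)) = Dom C e" using assms(1-12) by simp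
    moreover have "Dom C (Cmp C c (Cmp C d f)) = Dom C f" using assms(1-12) by simp
    ultimately have "Dom C f = Dom C e" using assms(13) by metis
    then show ?thesis using assms by (simp add: cat_assoc)
  qed
  finally show ?thesis .
qed
end

context fixes C1 :: "('o1,'m1) category" and C2 :: "('o2,'m2) category" and Fo Fm
  assumes isf: "is_functor C1 C2 Fo Fm"
begin
lemma fun_Ob [simp]: "A \<in> Ob C1 \<Longrightarrow> Fo A \<in> Ob C2"
  using isf unfolding is_functor_def by auto
lemma fun_Ar [simp]: "f \<in> Ar C1 \<Longrightarrow> Fm f \<in> Ar C2" "f \<in> Ar C1 \<Longrightarrow> Dom C2 (Fm f) = Fo (Dom C1 f)"
  "f \<in> Ar C1 \<Longrightarrow> Cod C2 (Fm f) = Fo (Cod C1 f)"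
  using isf unfolding is_functor_def by auto
lemma fun_Idm [simp]: "A \<in> Ob C1 \<Longrightarrow> Fm (Idm C1 A) = Idm C2 (Fo A)"
  using isf unfolding is_functor_def by auto
lemma fun_Cmp: "f \<in> Ar C1 \<Longrightarrow> g \<in> Ar C1 \<Longrightarrow> Cod C1 f = Dom C1 g \<Longrightarrow> Fm (Cmp C1 g f) = Cmp C2 (Fm g) (Fm f)"
  using isf unfolding is_functor_def by auto
end

context fixes V :: "('o,'m) vtc_data" assumes vtc: "is_vtc V"
begin
lemma vtc_cat: "is_category (VCat V)" using vtc unfolding is_vtc_def Let_def by auto
lemma vtc_unit [simp]: "VUnit V \<in> Ob (VCat V)" using vtc unfolding is_vtc_def Let_def by auto
lemma vtc_bif: "z \<noteq> 0 \<Longrightarrow> is_bifunctor (VCat V) (VTob V z) (VTar V z)"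
  using vtc unfolding is_vtc_def Let_def by auto
lemma vtc_Tob [simp]: "z \<noteq> 0 \<Longrightarrow> A \<in> Ob (VCat V) \<Longrightarrow> B \<in> Ob (VCat V) \<Longrightarrow> VTob V z A B \<in> Ob (VCat V)"
  using vtc_bif unfolding is_bifunctor_def by auto
lemma vtc_Tar [simp]:
  "z \<noteq> 0 \<Longrightarrow> f \<in> Ar (VCat V) \<Longrightarrow> g \<in> Ar (VCat V) \<Longrightarrow> VTar V z f g \<in> Ar (VCat V)"
  "z \<noteq> 0 \<Longrightarrow> f \<in> Ar (VCat V) \<Longrightarrow> g \<in> Ar (VCat V) \<Longrightarrow> Dom (VCat V) (VTar V z f g) = VTob V z (Dom (VCat V) f) (Dom (VCat V) g)"
  "z \<noteq> 0 \<Longrightarrow> f \<in> Ar (VCat V) \<Longrightarrow> g \<in> Ar (VCat V) \<Longrightarrow> Cod (VCat V) (VTar V z f g) = VTob V z (Cod (VCat V) f) (Cod (VCat V) g)"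
  using vtc_bif unfolding is_bifunctor_def hom_iff by blast+
lemma vtc_Tar_Idm [simp]: "z \<noteq> 0 \<Longrightarrow> A \<in> Ob (VCat V) \<Longrightarrow> B \<in> Ob (VCat V) \<Longrightarrow>
   VTar V z (Idm (VCat V) A) (Idm (VCat V) B) = Idm (VCat V) (VTob V z A B)"
  using vtc_bif unfolding is_bifunctor_def by blast
lemma vtc_Tar_Cmp: "z \<noteq> 0 \<Longrightarrow> f \<in> Ar (VCat V) \<Longrightarrow> g \<in> Ar (VCat V) \<Longrightarrow> f' \<in> Ar (VCat V) \<Longrightarrow> g' \<in> Ar (VCat V)
  \<Longrightarrow> Cod (VCat V) f = Dom (VCat V) g \<Longrightarrow> Cod (VCat V) f' = Dom (VCat V) g' \<Longrightarrow>
   VTar V z (Cmp (VCat V) g f) (Cmp (VCat V) g' f') = Cmp (VCat V) (VTar V z g g') (VTar V z f f')"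
  using vtc_bif unfolding is_bifunctor_def by blast
lemma vtc_Par [simp]:
  "cpath \<gamma> \<Longrightarrow> A \<in> Ob (VCat V) \<Longrightarrow> B \<in> Ob (VCat V) \<Longrightarrow> VPar V \<gamma> A B \<in> Ar (VCat V)"
  "cpath \<gamma> \<Longrightarrow> A \<in> Ob (VCat V) \<Longrightarrow> B \<in> Ob (VCat V) \<Longrightarrow> Dom (VCat V) (VPar V \<gamma> A B) = VTob V (pathstart \<gamma>) A B"
  "cpath \<gamma> \<Longrightarrow> A \<in> Ob (VCat V) \<Longrightarrow> B \<in> Ob (VCat V) \<Longrightarrow> Cod (VCat V) (VPar V \<gamma> A B) = VTob V (pathfinish \<gamma>) A B"
  using vtc unfolding is_vtc_def Let_def hom_iff by meson+
lemma vtc_Par_nat: "cpath \<gamma> \<Longrightarrow> f \<in> Ar (VCat V) \<Longrightarrow> g \<in> Ar (VCat V) \<Longrightarrow>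
   Cmp (VCat V) (VPar V \<gamma> (Cod (VCat V) f) (Cod (VCat V) g)) (VTar V (pathstart \<gamma>) f g) =
           Cmp (VCat V) (VTar V (pathfinish \<gamma>) f g) (VPar V \<gamma> (Dom (VCat V) f) (Dom (VCat V) g))"
  using vtc unfolding is_vtc_def Let_def by meson
lemma vtc_A [simp]:
  "assoc_dom z1 z2 \<Longrightarrow> A \<in> Ob (VCat V) \<Longrightarrow> B \<in> Ob (VCat V) \<Longrightarrow> D \<in> Ob (VCat V) \<Longrightarrow> VA V z1 z2 A B D \<in> Ar (VCat V)"
  "assoc_dom z1 z2 \<Longrightarrow> A \<in> Ob (VCat V) \<Longrightarrow> B \<in> Ob (VCat V) \<Longrightarrow> D \<in> Ob (VCat V) \<Longrightarrow> Dom (VCat V) (VA V z1 z2 A B D) = VTob V z1 A (VTob V z2 B D)"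
  "assoc_dom z1 z2 \<Longrightarrow> A \<in> Ob (VCat V) \<Longrightarrow> B \<in> Ob (VCat V) \<Longrightarrow> D \<in> Ob (VCat V) \<Longrightarrow> Cod (VCat V) (VA V z1 z2 A B D) = VTob V z2 (VTob V (z1 - z2) A B) D"
  using vtc unfolding is_vtc_def Let_def hom_iff by meson+
lemma vtc_B [simp]:
  "z \<noteq> 0 \<Longrightarrow> A \<in> Ob (VCat V) \<Longrightarrow> B \<in> Ob (VCat V) \<Longrightarrow> VB V z A B \<in> Ar (VCat V)"
  "z \<noteq> 0 \<Longrightarrow> A \<in> Ob (VCat V) \<Longrightarrow> B \<in> Ob (VCat V) \<Longrightarrow> Dom (VCat V) (VB V z A B) = VTob V z A B"
  "z \<noteq> 0 \<Longrightarrow> A \<in> Ob (VCat V) \<Longrightarrow> B \<in> Ob (VCat V) \<Longrightarrow> Cod (VCat V) (VB V z A B) = VTob V (-z) B A"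
  using vtc unfolding is_vtc_def Let_def hom_iff by meson+
end


context fixes s V1 V2 Fo Fm J \<phi>
  assumes vtf: "is_vertex_tensor_functor s V1 V2 Fo Fm J \<phi>"
begin
lemma vtf_fun: "is_functor (VCat V1) (VCat V2) Fo Fm"
  using vtf unfolding is_vertex_tensor_functor_def Let_def by auto
lemma vtf_J [simp]:
  "z \<noteq> 0 \<Longrightarrow> A \<in> Ob (VCat V1) \<Longrightarrow> B \<in> Ob (VCat V1) \<Longrightarrow> J z A B \<in> Ar (VCat V2)"
  "z \<noteq> 0 \<Longrightarrow> A \<in> Ob (VCat V1) \<Longrightarrow> B \<in> Ob (VCat V1) \<Longrightarrow> Dom (VCat V2) (J z A B) = VTob V2 z (Fo A) (Fo B)"
  "z \<noteq> 0 \<Longrightarrow> A \<in> Ob (VCat V1) \<Longrightarrow> B \<in> Ob (VCat V1) \<Longrightarrow> Cod (VCat V2) (J z A B) = Fo (VTob V1 z A B)"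
  using vtf unfolding is_vertex_tensor_functor_def Let_def hom_iff by meson+
lemma vtf_J_nat: "z \<noteq> 0 \<Longrightarrow> f \<in> Ar (VCat V1) \<Longrightarrow> g \<in> Ar (VCat V1) \<Longrightarrow>
           Cmp (VCat V2) (Fm (VTar V1 z f g)) (J z (Dom (VCat V1) f) (Dom (VCat V1) g)) =
           Cmp (VCat V2) (J z (Cod (VCat V1) f) (Cod (VCat V1) g)) (VTar V2 z (Fm f) (Fm g))"
  using vtf unfolding is_vertex_tensor_functor_def Let_def by meson
lemma vtf_J_par: "cpath \<gamma> \<Longrightarrow> A \<in> Ob (VCat V1) \<Longrightarrow> B \<in> Ob (VCat V1) \<Longrightarrow>
        Cmp (VCat V2) (J (pathfinish \<gamma>) A B) (VPar V2 \<gamma> (Fo A) (Fo B)) =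
        Cmp (VCat V2) (Fm (VPar V1 \<gamma> A B)) (J (pathstart \<gamma>) A B)"
  using vtf unfolding is_vertex_tensor_functor_def Let_def by meson
lemma vtf_J_assoc: "assoc_dom z1 z2 \<Longrightarrow> M1 \<in> Ob (VCat V1) \<Longrightarrow> M2 \<in> Ob (VCat V1) \<Longrightarrow> M3 \<in> Ob (VCat V1) \<Longrightarrow>
        Cmp (VCat V2) (J z2 (VTob V1 (z1 - z2) M1 M2) M3)
          (Cmp (VCat V2) (VTar V2 z2 (J (z1 - z2) M1 M2) (Idm (VCat V2) (Fo M3)))
                  (VA V2 z1 z2 (Fo M1) (Fo M2) (Fo M3))) =
        Cmp (VCat V2) (Fm (VA V1 z1 z2 M1 M2 M3))
          (Cmp (VCat V2) (J z1 M1 (VTob V1 z2 M2 M3))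
                  (VTar V2 z1 (Idm (VCat V2) (Fo M1)) (J z2 M2 M3)))"
  using vtf unfolding is_vertex_tensor_functor_def Let_def by meson
lemma vtf_J_braid: "z \<noteq> 0 \<Longrightarrow> M1 \<in> Ob (VCat V1) \<Longrightarrow> M2 \<in> Ob (VCat V1) \<Longrightarrow>
        Cmp (VCat V2) (J (- z) M2 M1) (VB V2 z (Fo M1) (Fo M2)) =
        Cmp (VCat V2) (Fm (VB V1 z M1 M2)) (J z M1 M2)"
  using vtf unfolding is_vertex_tensor_functor_def Let_def by meson
end


lemma assoc_dom_reals: "r1 > r2 \<Longrightarrow> r2 > r1 - r2 \<Longrightarrow> r1 - r2 > 0 \<Longrightarrow>
  assoc_dom (complex_of_real r1) (complex_of_real r2)"
  unfolding assoc_dom_def by (simp flip: of_real_diff)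

theorem mainTheorem13:
  fixes strong :: bool
    and V1 :: "('o1, 'm1) vtc_data" and V2 :: "('o2, 'm2) vtc_data"
    and Fo :: "'o1 \<Rightarrow> 'o2" and Fm :: "'m1 \<Rightarrow> 'm2"
    and J :: "complex \<Rightarrow> 'o1 \<Rightarrow> 'o1 \<Rightarrow> 'm2" and \<phi> :: 'm2
    and r1 r2 :: real
  assumes "is_vtc V1" and "is_vtc V2"
    and "is_vertex_tensor_functor strong V1 V2 Fo Fm J \<phi>"
    and "r1 > r2" and "r2 > r1 - r2" and "r1 - r2 > 0"
  shows "is_braided_tensor_functor strong (induced_btc V1 r1 r2) (induced_btc V2 r1 r2)
           Fo Fm (J 1) \<phi>"
proof -
  let ?C1 = "VCat V1" and ?C2 = "VCat V2"
  let ?c = "Cmp (VCat V2)"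
  let ?q1 = "complex_of_real r1" and ?q2 = "complex_of_real r2"
  let ?qd = "complex_of_real r1 - complex_of_real r2"
  let ?p21 = "rpath r2 1" and ?pd1 = "rpath (r1 - r2) 1" and ?p12 = "rpath 1 r2" and ?p11 = "rpath 1 r1"
  have cat1: "is_category ?C1" by (rule vtc_cat[OF assms(1)])
  have cat2: "is_category ?C2" by (rule vtc_cat[OF assms(2)])
  have F: "is_functor ?C1 ?C2 Fo Fm" by (rule vtf_fun[OF assms(3)])
  have r1: "r1 > 0" "r2 > 0" using assms by auto
  have nz: "?q1 \<noteq> 0" "?q2 \<noteq> 0" "?qd \<noteq> 0" "(1::complex) \<noteq> 0" "(-1::complex) \<noteq> 0"
    using assms by (auto simp flip: of_real_diff)
  have cp: "cpath ?p21" "cpath ?pd1" "cpath ?p12" "cpath ?p11" "cpath minus_one_to_one"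
    using r1 assms by (auto intro!: cpath_rpath cpath_m11)
  have ad: "assoc_dom ?q1 ?q2" using assms(4-6) by (rule assoc_dom_reals)
  have nzr: "r1 \<noteq> 0" "r2 \<noteq> 0" "r1 \<noteq> r2" "r2 \<noteq> r1" using assms by auto
  note [simp] = nz nzr cp ad
    cat_Cmp_Ar[OF cat1] cat_Cmp_Dom[OF cat1] cat_Cmp_Cod[OF cat1] cat_Idm[OF cat1] cat_DomCod_Ob[OF cat1]
    cat_idl[OF cat1] cat_idr[OF cat1]
    cat_Cmp_Ar[OF cat2] cat_Cmp_Dom[OF cat2] cat_Cmp_Cod[OF cat2] cat_Idm[OF cat2] cat_DomCod_Ob[OF cat2]
    cat_idl[OF cat2] cat_idr[OF cat2]
    fun_Ob[OF F] fun_Ar[OF F] fun_Idm[OF F]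
    vtc_unit[OF assms(1)] vtc_Tob[OF assms(1)] vtc_Tar[OF assms(1)] vtc_Tar_Idm[OF assms(1)] vtc_Par[OF assms(1)]
    vtc_A[OF assms(1)] vtc_B[OF assms(1)]
    vtc_unit[OF assms(2)] vtc_Tob[OF assms(2)] vtc_Tar[OF assms(2)] vtc_Tar_Idm[OF assms(2)] vtc_Par[OF assms(2)]
    vtc_A[OF assms(2)] vtc_B[OF assms(2)]
    vtf_J[OF assms(3)]
  have h_assoc: "Cmp ?C2 (J 1 (VTob V1 1 M1 M2) M3)
          (Cmp ?C2 (VTar V2 1 (J 1 M1 M2) (Idm ?C2 (Fo M3))) (induced_assoc V2 r1 r2 (Fo M1) (Fo M2) (Fo M3))) =
        Cmp ?C2 (Fm (induced_assoc V1 r1 r2 M1 M2 M3))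
          (Cmp ?C2 (J 1 M1 (VTob V1 1 M2 M3)) (VTar V2 1 (Idm ?C2 (Fo M1)) (J 1 M2 M3)))"
    if M: "M1 \<in> Ob ?C1" "M2 \<in> Ob ?C1" "M3 \<in> Ob ?C1" for M1 M2 M3
  proof -
    let ?a1 = "Fo M1" and ?a2 = "Fo M2" and ?a3 = "Fo M3"
    let ?X12 = "VTob V1 1 M1 M2" and ?Xd = "VTob V1 ?qd M1 M2"
    let ?Y1 = "VTob V1 1 M2 M3" and ?Y2 = "VTob V1 ?q2 M2 M3"
    let ?b12 = "VTob V2 1 ?a1 ?a2" and ?b23 = "VTob V2 1 ?a2 ?a3"
    let ?i1 = "Idm ?C2 ?a1" and ?i3 = "Idm ?C2 ?a3"
    let ?JX = "J 1 ?X12 M3"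
    let ?P1 = "VTar V2 1 (J 1 M1 M2) ?i3"
    let ?T21 = "VPar V2 ?p21 ?b12 ?a3"
    let ?Q = "VTar V2 ?q2 (VPar V2 ?pd1 ?a1 ?a2) ?i3"
    let ?A2 = "VA V2 ?q1 ?q2 ?a1 ?a2 ?a3"
    let ?R = "VTar V2 ?q1 ?i1 (VPar V2 ?p12 ?a2 ?a3)"
    let ?T11 = "VPar V2 ?p11 ?a1 ?b23"
    let ?T21' = "VPar V2 ?p21 (Fo ?X12) ?a3"
    let ?P2 = "VTar V2 ?q2 (J 1 M1 M2) ?i3"
    let ?FT21 = "Fm (VPar V1 ?p21 ?X12 M3)"
    let ?Jq2X = "J ?q2 ?X12 M3"
    let ?FT = "VTar V2 ?q2 (Fm (VPar V1 ?pd1 M1 M2)) ?i3"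
    let ?Jd = "VTar V2 ?q2 (J ?qd M1 M2) ?i3"
    let ?FTT = "Fm (VTar V1 ?q2 (VPar V1 ?pd1 M1 M2) (Idm ?C1 M3))"
    let ?Jq2Xd = "J ?q2 ?Xd M3"
    let ?FA = "Fm (VA V1 ?q1 ?q2 M1 M2 M3)"
    let ?Jq1 = "J ?q1 M1 ?Y2"
    let ?I2 = "VTar V2 ?q1 ?i1 (J ?q2 M2 M3)"
    let ?c6 = "VTar V2 ?q1 ?i1 (Fm (VPar V1 ?p12 M2 M3))"
    let ?d6 = "VTar V2 ?q1 ?i1 (J 1 M2 M3)"
    let ?FIT = "Fm (VTar V1 ?q1 (Idm ?C1 M1) (VPar V1 ?p12 M2 M3))"
    let ?Jq1' = "J ?q1 M1 ?Y1"
    let ?T11' = "VPar V2 ?p11 ?a1 (Fo ?Y1)"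
    let ?P8 = "VTar V2 1 ?i1 (J 1 M2 M3)"
    let ?FT11 = "Fm (VPar V1 ?p11 M1 ?Y1)"
    let ?J1 = "J 1 M1 ?Y1"
    note [simp] = M
    have e1: "?c ?P1 ?T21 = ?c ?T21' ?P2"
      using vtc_Par_nat[OF assms(2) cp(1), of "J 1 M1 M2" ?i3] by simp
    have e2: "?c ?JX ?T21' = ?c ?FT21 ?Jq2X"
      using vtf_J_par[OF assms(3) cp(1), of ?X12 M3] by simp
    have e3: "?c ?P2 ?Q = ?c ?FT ?Jd"
    proof -
      have j: "?c (J 1 M1 M2) (VPar V2 ?pd1 ?a1 ?a2) = ?c (Fm (VPar V1 ?pd1 M1 M2)) (J ?qd M1 M2)"
        using vtf_J_par[OF assms(3) cp(2), of M1 M2] by simp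
      have "?c ?P2 ?Q = VTar V2 ?q2 (?c (J 1 M1 M2) (VPar V2 ?pd1 ?a1 ?a2)) (?c ?i3 ?i3)"
        by (subst vtc_Tar_Cmp[OF assms(2)]) simp_all
      also have "\<dots> = VTar V2 ?q2 (?c (Fm (VPar V1 ?pd1 M1 M2)) (J ?qd M1 M2)) (?c ?i3 ?i3)"
        by (simp only: j)
      also have "\<dots> = ?c ?FT ?Jd"
        by (subst vtc_Tar_Cmp[OF assms(2)]) simp_all
      finally show ?thesis .
    qed
    have e4: "?c ?Jq2X ?FT = ?c ?FTT ?Jq2Xd"
      using vtf_J_nat[OF assms(3), of ?q2 "VPar V1 ?pd1 M1 M2" "Idm ?C1 M3"] by simp
    have e5: "?c ?Jq2Xd (?c ?Jd ?A2) = ?c ?FA (?c ?Jq1 ?I2)"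
      using vtf_J_assoc[OF assms(3) ad M] by simp
    have e6: "?c ?I2 ?R = ?c ?c6 ?d6"
    proof -
      have j: "?c (J ?q2 M2 M3) (VPar V2 ?p12 ?a2 ?a3) = ?c (Fm (VPar V1 ?p12 M2 M3)) (J 1 M2 M3)"
        using vtf_J_par[OF assms(3) cp(3), of M2 M3] by simp
      have "?c ?I2 ?R = VTar V2 ?q1 (?c ?i1 ?i1) (?c (J ?q2 M2 M3) (VPar V2 ?p12 ?a2 ?a3))"
        by (subst vtc_Tar_Cmp[OF assms(2)]) simp_all
      also have "\<dots> = VTar V2 ?q1 (?c ?i1 ?i1) (?c (Fm (VPar V1 ?p12 M2 M3)) (J 1 M2 M3))"
        by (simp only: j)
      also have "\<dots> = ?c ?c6 ?d6"
        by (subst vtc_Tar_Cmp[OF assms(2)]) simp_all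
      finally show ?thesis .
    qed
    have e7: "?c ?Jq1 ?c6 = ?c ?FIT ?Jq1'"
      using vtf_J_nat[OF assms(3), of ?q1 "Idm ?C1 M1" "VPar V1 ?p12 M2 M3"] by simp
    have e8: "?c ?d6 ?T11 = ?c ?T11' ?P8"
      using vtc_Par_nat[OF assms(2) cp(4), of ?i1 "J 1 M2 M3"] by simp
    have e9: "?c ?Jq1' ?T11' = ?c ?FT11 ?J1"
      using vtf_J_par[OF assms(3) cp(4), of M1 ?Y1] by simp
    have "Cmp ?C2 (J 1 (VTob V1 1 M1 M2) M3)
          (Cmp ?C2 (VTar V2 1 (J 1 M1 M2) (Idm ?C2 (Fo M3))) (induced_assoc V2 r1 r2 (Fo M1) (Fo M2) (Fo M3)))
        = ?c ?JX (?c ?P1 (?c ?T21 (?c ?Q (?c ?A2 (?c ?R ?T11)))))"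
      by (simp only: induced_assoc_def Let_def)
    also have "\<dots> = ?c ?JX (?c ?T21' (?c ?P2 (?c ?Q (?c ?A2 (?c ?R ?T11)))))"
      by (rule arg_cong[where f="?c ?JX"], rule step2[OF cat2]) (use e1 in simp_all)
    also have "\<dots> = ?c ?FT21 (?c ?Jq2X (?c ?P2 (?c ?Q (?c ?A2 (?c ?R ?T11)))))"
      by (rule step2[OF cat2]) (use e2 in simp_all)
    also have "\<dots> = ?c ?FT21 (?c ?Jq2X (?c ?FT (?c ?Jd (?c ?A2 (?c ?R ?T11)))))"
      by (rule arg_cong[where f="?c ?FT21"], rule arg_cong[where f="?c ?Jq2X"], rule step2[OF cat2])
         (use e3 in simp_all)
    also have "\<dots> = ?c ?FT21 (?c ?FTT (?c ?Jq2Xd (?c ?Jd (?c ?A2 (?c ?R ?T11)))))"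
      by (rule arg_cong[where f="?c ?FT21"], rule step2[OF cat2]) (use e4 in simp_all)
    also have "\<dots> = ?c ?FT21 (?c ?FTT (?c ?FA (?c ?Jq1 (?c ?I2 (?c ?R ?T11)))))"
      by (rule arg_cong[where f="?c ?FT21"], rule arg_cong[where f="?c ?FTT"], rule step3[OF cat2])
         (use e5 in simp_all)
    also have "\<dots> = ?c ?FT21 (?c ?FTT (?c ?FA (?c ?Jq1 (?c ?c6 (?c ?d6 ?T11)))))"
      by (rule arg_cong[where f="?c ?FT21"], rule arg_cong[where f="?c ?FTT"],
          rule arg_cong[where f="?c ?FA"], rule arg_cong[where f="?c ?Jq1"], rule step2[OF cat2])
         (use e6 in simp_all)
    also have "\<dots> = ?c ?FT21 (?c ?FTT (?c ?FA (?c ?FIT (?c ?Jq1' (?c ?d6 ?T11)))))"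
      by (rule arg_cong[where f="?c ?FT21"], rule arg_cong[where f="?c ?FTT"],
          rule arg_cong[where f="?c ?FA"], rule step2[OF cat2])
         (use e7 in simp_all)
    also have "\<dots> = ?c ?FT21 (?c ?FTT (?c ?FA (?c ?FIT (?c ?Jq1' (?c ?T11' ?P8)))))"
      by (simp only: e8)
    also have "\<dots> = ?c ?FT21 (?c ?FTT (?c ?FA (?c ?FIT (?c ?FT11 (?c ?J1 ?P8)))))"
      by (rule arg_cong[where f="?c ?FT21"], rule arg_cong[where f="?c ?FTT"],
          rule arg_cong[where f="?c ?FA"], rule arg_cong[where f="?c ?FIT"], rule step2[OF cat2])
         (use e9 in simp_all)
    also have "\<dots> = Cmp ?C2 (Fm (induced_assoc V1 r1 r2 M1 M2 M3))
          (Cmp ?C2 (J 1 M1 (VTob V1 1 M2 M3)) (VTar V2 1 (Idm ?C2 (Fo M1)) (J 1 M2 M3)))"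
      by (simp add: induced_assoc_def Let_def fun_Cmp[OF F] cat_assoc[OF cat2])
    finally show ?thesis .
  qed
  have h_braid: "Cmp ?C2 (J 1 M2 M1) (Cmp ?C2 (VPar V2 minus_one_to_one (Fo M2) (Fo M1)) (VB V2 1 (Fo M1) (Fo M2)))
     = Cmp ?C2 (Fm (Cmp ?C1 (VPar V1 minus_one_to_one M2 M1) (VB V1 1 M1 M2))) (J 1 M1 M2)"
    if M: "M1 \<in> Ob ?C1" "M2 \<in> Ob ?C1" for M1 M2
  proof -
    note [simp] = M
    have ea: "?c (J 1 M2 M1) (VPar V2 minus_one_to_one (Fo M2) (Fo M1)) =
       ?c (Fm (VPar V1 minus_one_to_one M2 M1)) (J (-1) M2 M1)"
      using vtf_J_par[OF assms(3) cp(5), of M2 M1] by simp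
    have eb: "?c (J (-1) M2 M1) (VB V2 1 (Fo M1) (Fo M2)) = ?c (Fm (VB V1 1 M1 M2)) (J 1 M1 M2)"
      using vtf_J_braid[OF assms(3), of 1 M1 M2] by simp
    have "Cmp ?C2 (J 1 M2 M1) (Cmp ?C2 (VPar V2 minus_one_to_one (Fo M2) (Fo M1)) (VB V2 1 (Fo M1) (Fo M2)))
        = ?c (Fm (VPar V1 minus_one_to_one M2 M1)) (?c (J (-1) M2 M1) (VB V2 1 (Fo M1) (Fo M2)))"
      by (rule step2[OF cat2]) (use ea in simp_all)
    also have "\<dots> = ?c (Fm (VPar V1 minus_one_to_one M2 M1)) (?c (Fm (VB V1 1 M1 M2)) (J 1 M1 M2))"
      by (simp only: eb)
    also have "\<dots> = Cmp ?C2 (Fm (Cmp ?C1 (VPar V1 minus_one_to_one M2 M1) (VB V1 1 M1 M2))) (J 1 M1 M2)"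
      by (simp add: fun_Cmp[OF F] cat_assoc[OF cat2])
    finally show ?thesis .
  qed
  have V: "(\<forall>z. z \<noteq> 0 \<longrightarrow>
        (\<forall>A\<in>Ob ?C1. \<forall>B\<in>Ob ?C1.
           J z A B \<in> hom ?C2 (VTob V2 z (Fo A) (Fo B)) (Fo (VTob V1 z A B)) \<and>
           (strong \<longrightarrow> is_iso ?C2 (J z A B))) \<and>
        (\<forall>f\<in>Ar ?C1. \<forall>g\<in>Ar ?C1.
           Cmp ?C2 (Fm (VTar V1 z f g)) (J z (Dom ?C1 f) (Dom ?C1 g)) =
           Cmp ?C2 (J z (Cod ?C1 f) (Cod ?C1 g)) (VTar V2 z (Fm f) (Fm g))))"
     "\<phi> \<in> hom ?C2 (VUnit V2) (Fo (VUnit V1)) \<and> is_iso ?C2 \<phi>"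
     "(\<forall>z. z \<noteq> 0 \<longrightarrow> (\<forall>M\<in>Ob ?C1.
        Cmp ?C2 (Fm (VL V1 z M)) (Cmp ?C2 (J z (VUnit V1) M) (VTar V2 z \<phi> (Idm ?C2 (Fo M))))
          = VL V2 z (Fo M) \<and>
        Cmp ?C2 (Fm (VR V1 z M)) (Cmp ?C2 (J z M (VUnit V1)) (VTar V2 z (Idm ?C2 (Fo M)) \<phi>))
          = VR V2 z (Fo M)))"
    using assms(3) unfolding is_vertex_tensor_functor_def Let_def by blast+
  show ?thesis
    unfolding is_braided_tensor_functor_def induced_btc_def Let_def btc_data.simps
    using F V(2) h_assoc h_braid V(1)[rule_format, OF nz(4)] V(3)[rule_format, OF nz(4)]
    unfolding Let_def by blast
qed

end
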